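(* Under the setting of the previous lemma (le:VFOG_key_estimate1) recalled in the context, take $c_1=c_2:=\frac{s-2}{8(s-1)}$ and assume $s>2$, $t_0\ge s+1$, $\frac{M^2\eta^2t_k}{t_k-s}\le1$ for all $k\ge0$, $\gamma<16\eta$, and $(3s-2)\eta\ge8(s-1)\rho_n$. Then $\beta_k\le[\frac{(s-2)\eta}{4(s-1)}+2\rho_n]\frac{t_k-s}{t_k}$ for all $k$, and for all $k\ge0$, $$\begin{aligned}\mathcal P_k-\mathcal P_{k+1}\ge{}&\tfrac{\eta t_k^2}{2}\Big[(1-\alpha)\big(\mathbb E_\xi\|\mathbf G_\xi x^{k+1}-\mathbf G_\xi y^k\|^2-\|Gx^{k+1}-Gy^k\|^2\big)+\omega L^2\|x^{k+1}-y^k\|^2\Big]\\&+\rho_ct_k(t_k-s)\mathbb E_\xi\|\mathbf G_\xi x^{k+1}-\mathbf G_\xi x^k\|^2+\tfrac{\eta t_k(t_k-s)}2\Big(1-\tfrac{M^2\eta^2t_k}{t_k-s}\Big)\|\hat w^{k+1}-w^k\|^2+\tfrac{\eta st_k}{2}\|\hat w^{k+1}\|^2\\&+\tfrac{\phi_k}2\|w^k\|^2+s(s-1)\langle w^k,x^k-x^\star\rangle-\varphi t_{k-1}^2\|w^k-\hat w^k\|^2-\tfrac{(5s-6)\eta t_k^2}{s-2}\|e^k\|^2-\varphi t_{k-1}^2\|e^{k-1}\|^2,\end{aligned}$$ where $\phi_k:=[\frac{s-2}2\eta-4(s-1)\rho_n-3\gamma](t_k-1)+\frac{(s-1)(s-2)\eta}4+2(2s^2-3s+1)\rho_n+\gamma$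 and $\varphi:=\frac{2(5s-6)\eta}{s-2}+(s-1)\gamma$.
   Context: Problem setting: $G:\mathbb R^p\to\mathbb R^p$ single-valued, $T:\mathbb R^p\rightrightarrows\mathbb R^p$ set-valued, $\Phi:=G+T$, $\mathrm{gra}\,\Phi:=\{(x,w):w\in Gx+Tx\}$, $\mathrm{zer}\,\Phi\ne\emptyset$, $J_{\eta T}:=(I+\eta T)^{-1}$. Stochastic oracle: random variable $\xi$ and maps $\mathbf G_\xi$ with $\mathbb E_\xi[\mathbf G_\xi x]=Gx$. Assumptions. (A1) there are $L>0$, $\alpha\in[0,1]$ with $\alpha\|Gx-Gy\|^2+(1-\alpha)\mathbb E_\xi\|\mathbf G_\xi x-\mathbf G_\xi y\|^2\le L^2\|x-y\|^2$. (A2) there are $x^\star\in\mathrm{zer}\,\Phi$, $\rho_*\ge0$ with $\langle w,x-x^\star\rangle\ge-\rho_*\|w\|^2$ for all $(x,w)\in\mathrm{gra}\,\Phi$. (A3) there are $\rho_n\ge\rho_c\ge0$ with $\langle w_x-w_y,x-y\rangle\ge-\rho_n\|w_x-w_y\|^2+\rho_c\mathbb E_\xi\|\mathbf G_\xi x-\mathbf G_\xi y\|^2$ for all $(x,w_x),(y,w_y)\in\mathrm{gra}\,\Phi$. Setting of lemma le:VFOG_key_estimate1: constants $s$, $\eta>0$, $\gamma>0$, $c_1,c_2>0$, $\omega\ge0$, $\psi:=(1-c_1-c_2)\eta-2\rho_n$; $t_{k+1}:=t_k+1$, $t_{-1}:=t_0-1$, $\gamma_k:=\frac{\gamma(t_k-1)}{t_k}$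 ($k\ge-1$), $\beta_k:=\frac{(c_1\eta+c_2\eta+2\rho_n)(t_k-s)-\gamma_k}{t_k}$, $M^2:=2(1+\omega)L^2$, $a_k:=\psi t_{k-1}^2+2s\rho_nt_{k-1}-\gamma(t_{k-1}-1)$, $\mathcal P_k:=\frac{a_k}2\|w^k\|^2+st_{k-1}\langle w^k,x^k-z^k\rangle+\frac{s^2(s-1)}{2\gamma_{k-1}}\|z^k-x^\star\|^2$, with $x^\star$ from (A2). Algorithm VFOG: choose $x^0$, $v^0\in Tx^0$, $z^0:=x^0$, $y^{-1}:=x^0$, $\widetilde Gy^{-1}:=Gx^0$. For $k\ge0$: $\hat x^k:=\frac{t_k-s}{t_k}x^k+\frac{s}{t_k}z^k$; $y^k:=\hat x^k-(\eta-\beta_k)(\widetilde Gy^{k-1}+v^k)$; given a vector $\widetilde Gy^k$, $x^{k+1}$ and $v^{k+1}\in Tx^{k+1}$ satisfy $x^{k+1}=\hat x^k-\eta(\widetilde Gy^k+v^{k+1})+\beta_k(\widetilde Gy^{k-1}+v^k)$; $z^{k+1}:=z^k-\frac{\gamma_k}{s}(\widetilde Gy^{k-1}+v^k)$. Notation: $w^k:=Gx^k+v^k$, $\hat w^k:=Gy^{k-1}+v^k$, $e^k:=\widetilde Gy^k-Gy^k$ (so $e^{-1}=0$). *)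

theory Defs
  imports "HOL-Probability.Probability"
begin

end

theory Submission
  imports Defs
begin

lemma sq_div: fixes x :: real assumes "x \<noteq> 0" shows "x^2/(2* x) = x/2"
  using assms by (simp add: power2_eq_square)

lemma polyB:
  fixes s t :: real
  assumes s: "s > 2" and t1: "s^2 < t" and t2: "t \<le> s + 16"
  shows "8*(t-1)*(t-s^2)/(s+1) \<le> (5* s-6)*(s-1)*(2* t-s-1)/(s-2) - s*(t-s)/2"
proof -
  define D where "D = 16 + s - s^2"
  have s4: "2*2 < s* s" using s by (intro mult_strict_mono) auto
  have tm1: "t - 1 > 0" using s4 t1 by (simp add: power2_eq_square)
  have h1: "(t-1)*(t-s^2) \<le> (t-1)* D" using t2 tm1 unfolding D_def by (intro mult_left_mono) simp_all
  define c1 where "c1 = (5* s-6)*(s-1)/(s-2)"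
  have c1pos: "c1 > 0" using s unfolding c1_def by simp
  have h2: "3*(s-1) \<le> t - 1"
  proof -
    have "3*(s-1) \<le> (s+1)*(s-1)" using s by (intro mult_right_mono) simp_all
    also have "... = s^2 - 1" by (simp add: algebra_simps power2_eq_square)
    finally show ?thesis using t1 by simp
  qed
  have h3: "c1*(2* t-s-1) \<ge> (5/3)* c1*(t-1)"
  proof -
    have "2* t-s-1 \<ge> (5/3)*(t-1)" using h2 by simp
    then have "c1*(2* t-s-1) \<ge> c1*((5/3)*(t-1))" using c1pos by (intro mult_left_mono) simp_all
    then show ?thesis by (simp add: algebra_simps)
  qed
  have h4: "s*(t-s)/2 \<le> s*(t-1)/2" using s by (intro divide_right_mono mult_left_mono) simp_all
  have poly: "8* D/(s+1) \<le> (5/3)* c1 - s/2"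
  proof -
    define \<sigma> where "\<sigma> = s - 2"
    have sg: "\<sigma> > 0" using s unfolding \<sigma>_def by simp
    have P: "0 \<le> 95*\<sigma>^3 + 369*\<sigma>^2 - 380*\<sigma> + 120"
    proof -
      have a: "0 \<le> (369*\<sigma> - 190)^2" by simp
      have b: "0 \<le> \<sigma>^3" using sg by simp
      have c: "(369*\<sigma> - 190)^2 = 136161*\<sigma>^2 - 140220*\<sigma> + 36100" by (simp add: power2_eq_square algebra_simps)
      show ?thesis using a b c by linarith
    qed
    have s_eq: "s = \<sigma> + 2" unfolding \<sigma>_def by simp
    have nz: "\<sigma> \<noteq> 0" "\<sigma> + 3 \<noteq> 0" using sg by simp_all
    have eq: "(5/3)* c1 - s/2 - 8* D/(s+1) = (95*\<sigma>^3 + 369*\<sigma>^2 - 380*\<sigma> + 120) / (6*\<sigma>*(\<sigma>+3))"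
      unfolding c1_def D_def s_eq using nz
      by (simp add: field_simps power2_eq_square power3_eq_cube)
    have "0 \<le> (5/3)* c1 - s/2 - 8* D/(s+1)"
      unfolding eq using P sg by (intro divide_nonneg_pos) simp_all
    then show ?thesis by simp
  qed
  have "8*((t-1)*(t-s^2)) \<le> 8*((t-1)* D)" using h1 by linarith
  then have "8*(t-1)*(t-s^2) \<le> 8*(t-1)* D" by (simp only: mult.assoc)
  then have "8*(t-1)*(t-s^2)/(s+1) \<le> 8*(t-1)* D/(s+1)"
    using s by (intro divide_right_mono) simp_all
  also have "... = (t-1)*(8* D/(s+1))" by simp
  also have "... \<le> (t-1)*((5/3)* c1 - s/2)" using poly tm1 by (intro mult_left_mono) simp_all
  also have "... = (5/3)* c1*(t-1) - s*(t-1)/2" by (simp add: algebra_simps)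
  also have "... \<le> c1*(2* t-s-1) - s*(t-s)/2" using h3 h4 by linarith
  also have "... = (5* s-6)*(s-1)*(2* t-s-1)/(s-2) - s*(t-s)/2" unfolding c1_def by simp
  finally show ?thesis .
qed

lemma ZI:
  fixes s t a k q :: real
  assumes s: "s > 2" and ts: "t \<ge> s + 1" and a0: "0 \<le> a" and a1: "a \<le> 1"
    and k0: "0 \<le> k" and k16: "k \<le> 16"
    and q: "q = 2*(s-1)/(s-2)" and reg: "t \<le> s^2 \<or> t \<le> s + 16"
  shows "0 \<le> (2* q+1)*(t-1)^2 + k*(t-1)*((s-1) - (t-1)/(s+1))/2 - t*(t-s)/2
              - q*(t-s)^2* a^2 - (t-s)^2*(2* q* a+1)^2/(2*(2* q+1))"
proof -
  have qpos: "q > 0" using s q by simp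
  have q2: "2* q+1 = (5* s-6)/(s-2)" using s q by (simp add: field_simps)
  have h1: "(2* q* a+1)^2 \<le> (2* q+1)^2"
    using qpos a0 a1 by (intro power_mono) (simp_all add: mult_left_le)
  have h2: "a^2 \<le> 1" using a0 a1 by (simp add: power_le_one)
  have b1: "q*(t-s)^2* a^2 \<le> q*(t-s)^2" using h2 qpos by (simp add: mult_left_le)
  have b2: "(t-s)^2*(2* q* a+1)^2/(2*(2* q+1)) \<le> (t-s)^2*(2* q+1)/2"
  proof -
    have "(t-s)^2*(2* q* a+1)^2/(2*(2* q+1)) \<le> (t-s)^2*(2* q+1)^2/(2*(2* q+1))"
      using h1 qpos by (intro divide_right_mono mult_left_mono) simp_all
    also have "... = (t-s)^2*((2* q+1)^2/(2*(2* q+1)))" by simp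
    also have "(2* q+1)^2/(2*(2* q+1)) = (2* q+1)/2" using qpos sq_div[of "2* q+1"] by simp
    finally show ?thesis by simp
  qed
  have S0: "(2* q+1)*(t-1)^2 - t*(t-s)/2 - q*(t-s)^2 - (t-s)^2*(2* q+1)/2
      = (5* s-6)*(s-1)*(2* t-s-1)/(s-2) - s*(t-s)/2"
  proof -
    have "(2* q+1)*(t-1)^2 - t*(t-s)/2 - q*(t-s)^2 - (t-s)^2*(2* q+1)/2
        = (2* q+1)*(s-1)*(2* t-s-1) - s*(t-s)/2"
      by (simp add: field_simps power2_eq_square)
    also have "... = (5* s-6)*(s-1)*(2* t-s-1)/(s-2) - s*(t-s)/2" using q2 by simp
    finally show ?thesis .
  qed
  have main: "0 \<le> (5* s-6)*(s-1)*(2* t-s-1)/(s-2) - s*(t-s)/2 + k*(t-1)*((s-1) - (t-1)/(s+1))/2"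
  proof (cases "t \<le> s^2")
    case True
    have br: "0 \<le> (s-1) - (t-1)/(s+1)"
    proof -
      have "t - 1 \<le> (s-1)*(s+1)" using True by (simp add: algebra_simps power2_eq_square)
      then have "(t-1)/(s+1) \<le> s - 1" using s by (simp add: divide_le_eq)
      then show ?thesis by simp
    qed
    have kt: "0 \<le> k*(t-1)*((s-1) - (t-1)/(s+1))/2" using k0 ts s br by simp
    have c5: "5 \<le> (5* s-6)/(s-2)" using s by (simp add: le_divide_eq)
    have "s*(t-s)/2 \<le> 5*(s-1)*(2* t-s-1)"
    proof -
      have "s/2*(t-s) \<le> (5*(s-1))*(t-s)" using s ts by (intro mult_right_mono) simp_all
      also have "... \<le> (5*(s-1))*(2* t-s-1)" using s ts by (intro mult_left_mono) simp_all
      finally show ?thesis by simp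
    qed
    also have "... \<le> (5* s-6)/(s-2)*(s-1)*(2* t-s-1)" using c5 s ts by (intro mult_right_mono) simp_all
    also have "... = (5* s-6)*(s-1)*(2* t-s-1)/(s-2)" by simp
    finally show ?thesis using kt by linarith
  next
    case False
    then have t1: "s^2 < t" by simp
    with reg have t2: "t \<le> s + 16" by simp
    have br: "(s-1) - (t-1)/(s+1) = - ((t - s^2)/(s+1))" using s by (simp add: field_simps power2_eq_square)
    have p1: "0 < (t - s^2)/(s+1)" using t1 s by simp
    have Xneg: "(s-1) - (t-1)/(s+1) \<le> 0" using br p1 by linarith
    have neg: "(t-1)*((s-1) - (t-1)/(s+1))/2 \<le> 0" using Xneg ts s
      by (intro divide_nonpos_pos mult_nonneg_nonpos) simp_all
    define Y where "Y = (t-1)*((s-1) - (t-1)/(s+1))/2"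
    have f1: "16* Y \<le> k* Y" using neg k16 unfolding Y_def by (intro mult_right_mono_neg) simp_all
    have f2: "16* Y = -(8*(t-1)*(t-s^2)/(s+1))" unfolding Y_def using s
      by (simp add: field_simps power2_eq_square)
    have f3: "k*(t-1)*((s-1) - (t-1)/(s+1))/2 = k* Y" unfolding Y_def by simp
    note f4 = polyB[OF s t1 t2]
    show ?thesis using f1 f2 f3 f4 by linarith
  qed
  show ?thesis using main S0 b1 b2 by linarith
qed

lemma ZII:
  fixes s t b k q mu :: real
  assumes s: "s > 2" and t1: "t > s^2" and t2: "t > s + 16"
    and k0: "0 \<le> k" and k16: "k \<le> 16"
    and q: "q = 2*(s-1)/(s-2)" and blo: "-(t-1) \<le> b" and bhi: "b \<le> t - s"
    and mu: "mu = (t-1)/(t-s)"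
  shows "0 \<le> (2* q+1)*(t-1)^2 + k*(s-1)*(t-1)/2 - k* t* mu^2/2 - t*(t-s)/2 - q* b^2
              - (2* q* b + (t-s))^2/(2*(2* q+1))"
proof -
  define \<tau> where "\<tau> = t - s"
  have tau16: "\<tau> > 16" using t2 unfolding \<tau>_def by simp
  have tau2: "\<tau> > s*(s-1)" using t1 unfolding \<tau>_def by (simp add: algebra_simps power2_eq_square)
  have qpos: "q > 0" using s q by simp
  have tt: "t = \<tau> + s" unfolding \<tau>_def by simp
  have ts2: "t*(t-1) \<le> s*\<tau>^2"
  proof -
    have a: "(s-1)*\<tau>^2 \<ge> 16*(s-1)*\<tau>"
    proof -
      have "(s-1)*\<tau>*16 \<le> (s-1)*\<tau>*\<tau>" using s tau16 by (intro mult_left_mono) simp_all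
      then show ?thesis by (simp add: power2_eq_square algebra_simps)
    qed
    have b: "(14* s - 15)*\<tau> \<ge> \<tau>" using s tau16 by simp
    have e: "s*\<tau>^2 - t*(t-1) = (s-1)*\<tau>^2 - (2* s-1)*\<tau> - s*(s-1)" unfolding tt
      by (simp add: algebra_simps power2_eq_square)
    have e2: "16*(s-1)*\<tau> - (2* s-1)*\<tau> = (14* s - 15)*\<tau>" by (simp add: algebra_simps)
    show ?thesis using a b e e2 tau2 by linarith
  qed
  have tm1: "t - 1 > 0" using s t2 by simp
  have tmu: "t* mu^2 \<le> s*(t-1)"
  proof -
    have "t* mu^2 = (t*(t-1))*((t-1)/\<tau>^2)" unfolding mu \<tau>_def by (simp add: power2_eq_square)
    also have "... \<le> (s*\<tau>^2)*((t-1)/\<tau>^2)" using ts2 tm1 by (intro mult_right_mono) simp_all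
    also have "... = s*(t-1)" using tau16 by simp
    finally show ?thesis .
  qed
  have kt: "k*(s-1)*(t-1)/2 - k* t* mu^2/2 \<ge> -8*(t-1)"
  proof -
    have "k*(t* mu^2) \<le> k*(s*(t-1))" using tmu k0 by (intro mult_left_mono) simp_all
    moreover have "k*(t-1) \<le> 16*(t-1)" using k16 tm1 by (intro mult_right_mono) simp_all
    ultimately show ?thesis by (simp add: algebra_simps)
  qed
  have tau_le: "\<tau> \<le> t - 1" unfolding \<tau>_def using s by simp
  have bsq: "b^2 \<le> (t-1)^2"
  proof -
    have "\<bar>b\<bar> \<le> t - 1" using blo bhi tau_le unfolding \<tau>_def by simp
    then show ?thesis using tm1 by (metis abs_le_square_iff abs_of_pos)
  qed
  have qb: "q* b^2 \<le> q*(t-1)^2" using bsq qpos by simp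
  have c2: "(q+1)*(s-1) \<ge> 8 + s/2"
  proof -
    have "(q+1)*(s-1) = (3* s-4)*(s-1)/(s-2)" unfolding q using s by (simp add: field_simps)
    moreover have "(8 + s/2)*(s-2) \<le> (3* s-4)*(s-1)"
    proof -
      have "0 \<le> 5*(s - 14/5)^2 + 4/5" by simp
      moreover have "5*(s - 14/5)^2 + 4/5 = 2*((3* s-4)*(s-1) - (8 + s/2)*(s-2))"
        by (simp add: field_simps power2_eq_square)
      ultimately show ?thesis by simp
    qed
    ultimately show ?thesis using s by (simp add: le_divide_eq)
  qed
  show ?thesis
  proof (cases "2* q* b + \<tau> \<ge> 0")
    case True
    have hb: "2* q* b \<le> 2* q*\<tau>" using bhi qpos unfolding \<tau>_def by (intro mult_left_mono) simp_all
    have "2* q* b + \<tau> \<le> (2* q+1)*\<tau>" using hb by (simp add: algebra_simps)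
    then have sq: "(2* q* b + \<tau>)^2 \<le> ((2* q+1)*\<tau>)^2" using True by (intro power_mono) simp_all
    have sqd: "(2* q* b + \<tau>)^2/(2*(2* q+1)) \<le> (2* q+1)*\<tau>^2/2"
    proof -
      have "(2* q* b + \<tau>)^2/(2*(2* q+1)) \<le> ((2* q+1)*\<tau>)^2/(2*(2* q+1))"
        using sq qpos by (intro divide_right_mono) simp_all
      also have "... = \<tau>^2*((2* q+1)^2/(2*(2* q+1)))" by (simp add: power_mult_distrib)
      also have "(2* q+1)^2/(2*(2* q+1)) = (2* q+1)/2" using qpos sq_div[of "2* q+1"] by simp
      finally have "(2* q* b + \<tau>)^2/(2*(2* q+1)) \<le> \<tau>^2*((2* q+1)/2)" .
      moreover have "\<tau>^2*((2* q+1)/2) = (2* q+1)*\<tau>^2/2" by simp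
      ultimately show ?thesis by linarith
    qed
    have id: "(2* q+1)*(t-1)^2 - t*\<tau>/2 - q*(t-1)^2 - (2* q+1)*\<tau>^2/2
        = (q+1)*(s-1)*(2* t-s-1) - s*\<tau>/2" unfolding \<tau>_def by (simp add: field_simps power2_eq_square)
    have m1: "(q+1)*(s-1)*(2* t-s-1) \<ge> (8 + s/2)*(t-1)"
    proof -
      have "(8 + s/2)*(t-1) \<le> ((q+1)*(s-1))*(t-1)" using c2 tm1 by (intro mult_right_mono) simp_all
      also have "... \<le> ((q+1)*(s-1))*(2* t-s-1)" using c2 s t2 by (intro mult_left_mono) simp_all
      finally show ?thesis by simp
    qed
    have m2: "s*\<tau>/2 \<le> s*(t-1)/2" using tau_le s by simp
    have "0 \<le> (2* q+1)*(t-1)^2 - 8*(t-1) - t*\<tau>/2 - q*(t-1)^2 - (2* q+1)*\<tau>^2/2"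
    proof -
      have e: "(8 + s/2)*(t-1) = 8*(t-1) + s*(t-1)/2" by (simp add: algebra_simps)
      show ?thesis using id m1 m2 e by linarith
    qed
    then show ?thesis using kt qb sqd unfolding \<tau>_def by linarith
  next
    case False
    have "-(2* q* b + \<tau>) \<le> 2* q*(t-1)"
    proof -
      have "2* q*(-b) \<le> 2* q*(t-1)" using blo qpos by (intro mult_left_mono) simp_all
      then have "-(2* q* b) \<le> 2* q*(t-1)" by simp
      then show ?thesis using tau16 by linarith
    qed
    then have sq: "(2* q* b + \<tau>)^2 \<le> (2* q*(t-1))^2" using False
      by (metis abs_le_square_iff abs_of_neg abs_of_nonneg not_le qpos tm1 mult_nonneg_nonneg less_imp_le zero_le_numeral)
    have sqd: "(2* q* b + \<tau>)^2/(2*(2* q+1)) \<le> (2* q*(t-1))^2/(2*(2* q+1))"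
      using sq qpos by (intro divide_right_mono) simp_all
    have r1: "(2* q+1) - q - (2* q)^2/(2*(2* q+1)) \<ge> 1"
    proof -
      have "(2* q+1) - q - (2* q)^2/(2*(2* q+1)) = (3* q+1)/(2* q+1)" using qpos
        by (simp add: field_simps power2_eq_square)
      also have "... \<ge> 1" using qpos by simp
      finally show ?thesis .
    qed
    have r2: "((2* q+1) - q - (2* q)^2/(2*(2* q+1)))*(t-1)^2 \<ge> (t-1)^2"
    proof -
      have "1*(t-1)^2 \<le> ((2* q+1) - q - (2* q)^2/(2*(2* q+1)))*(t-1)^2"
        using r1 by (intro mult_right_mono) simp_all
      then show ?thesis by simp
    qed
    have r3: "(2* q*(t-1))^2/(2*(2* q+1)) = (2* q)^2/(2*(2* q+1))*(t-1)^2" by (simp add: power_mult_distrib)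
    have r4: "t*\<tau>/2 \<le> t*(t-1)/2" using tau_le t2 s by simp
    have r5: "(t-1)^2 - t*(t-1)/2 - 8*(t-1) = (t-1)*(t-18)/2" by (simp add: field_simps power2_eq_square)
    have r6: "0 \<le> (t-1)*(t-18)/2" using tm1 t2 s by simp
    have "0 \<le> (2* q+1)*(t-1)^2 - 8*(t-1) - t*\<tau>/2 - q*(t-1)^2 - (2* q*(t-1))^2/(2*(2* q+1))"
    proof -
      have e: "((2* q+1) - q - (2* q)^2/(2*(2* q+1)))*(t-1)^2
          = (2* q+1)*(t-1)^2 - q*(t-1)^2 - (2* q)^2/(2*(2* q+1))*(t-1)^2" by (simp only: left_diff_distrib)
      show ?thesis using r2 r3 r4 r5 r6 e by linarith
    qed
    then show ?thesis using kt qb sqd unfolding \<tau>_def by linarith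
  qed
qed
lemma sq2: fixes x y :: "'a::real_inner"
  shows "(norm (x + a *\<^sub>R y))^2 = (norm x)^2 + 2* a* inner x y + a^2*(norm y)^2"
  unfolding power2_norm_eq_inner
  by (simp add: inner_add_left inner_add_right inner_commute power2_eq_square algebra_simps)

lemma sq3: fixes x y z :: "'a::real_inner"
  shows "(norm (x + a *\<^sub>R y + b *\<^sub>R z))^2 = (norm x)^2 + a^2*(norm y)^2 + b^2*(norm z)^2
     + 2* a* inner x y + 2* b* inner x z + 2* a* b* inner y z"
  unfolding power2_norm_eq_inner
  by (simp add: inner_add_left inner_add_right inner_commute power2_eq_square algebra_simps)

lemma sq_young: fixes x y :: "'a::real_inner"
  assumes c: "c > 0"
  shows "0 \<le> c*(norm x)^2 - 2* b* inner x y + b^2/c*(norm y)^2"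
proof -
  have "0 \<le> c*(norm (x + (-(b/c)) *\<^sub>R y))^2" using c by simp
  also have "... = c*(norm x)^2 - 2* b* inner x y + b^2/c*(norm y)^2"
    unfolding sq2 using c by (simp add: field_simps power2_eq_square)
  finally show ?thesis .
qed

lemma frac2: fixes S a :: real assumes "S \<noteq> 0" shows "(a/2)^2/(S/2) = a^2/(2* S)"
  using assms by (simp add: field_simps power2_eq_square)

lemma zp1: fixes S \<eta> :: real assumes "S \<noteq> 0" "\<eta> \<noteq> 0"
  shows "\<kappa>*(s-1)*(t-1)/2 - \<kappa>*(t-1)^2/(2* S) = \<eta> * ((\<kappa>/\<eta>)*(t-1)*((s-1) - (t-1)/S)/2)"
  using assms by (simp add: field_simps power2_eq_square)

lemma zp2: fixes \<eta> :: real assumes "\<eta> \<noteq> 0"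
  shows "q/\<eta>* X^2 = \<eta>*(q*(X/\<eta>)^2)"
  using assms by (simp add: field_simps power2_eq_square)

lemma zp2b: fixes \<eta> :: real assumes "\<eta> \<noteq> 0"
  shows "q/\<eta>* X^2* Y^2 = \<eta>*(q* X^2*(Y/\<eta>)^2)"
  using assms by (simp add: field_simps power2_eq_square)

lemma zp3: fixes Q \<eta> t :: real assumes "Q \<noteq> 0" "\<eta> \<noteq> 0" "t \<noteq> 0"
  shows "(2* q* t*\<tau>* A + \<eta>* t*\<tau>)^2/(4*(\<eta>* Q* t^2/2)) = \<eta>*(\<tau>^2*(2* q*(A/\<eta>)+1)^2/(2* Q))"
  using assms by (simp add: field_simps power2_eq_square)

lemma zp4: fixes Q \<eta> t :: real assumes "Q \<noteq> 0" "\<eta> \<noteq> 0" "t \<noteq> 0"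
  shows "(2* q* t* B + \<eta>* t*\<tau>)^2/(4*(\<eta>* Q* t^2/2)) = \<eta>*((2* q*(B/\<eta>) + \<tau>)^2/(2* Q))"
  using assms by (simp add: field_simps power2_eq_square)

lemma core_I_id:
  fixes nV nwp nw nd ne iVe iVd iwd ied :: real
  assumes nz: "q \<noteq> 0" "\<eta> \<noteq> 0" "s + 1 \<noteq> 0" "E \<noteq> 0"
    and E: "E = \<eta>*(2* q+1)* t^2/2"
    and cx: "cx = 2* q* t*(t-s)* A + \<eta>* t*(t-s)"
    and Z1: "Z1 = (2* q+1)*\<eta>*(t-1)^2 + \<kappa>*(s-1)*(t-1)/2 - \<eta>* t*(t-s)/2 - q/\<eta>*(t-s)^2* A^2
              - \<kappa>*(t-1)^2/(2*(s+1)) - cx^2/(4* E)"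
  shows "\<eta>/(4* q)* nV + \<kappa>* t/2* nwp + ((s-1)*\<eta>/2 + \<kappa>*(s+1)/2)* nw
      + \<eta>* t* iVe - (t-s)* A* iVd - \<kappa>*(t-1)* iwd
      + ((2* q+1)*\<eta>*(t-1)^2 + \<kappa>*(s-1)*(t-1)/2)* nd - \<eta>* t*(t-s)/2*(nd - 2* ied + ne)
      + (2* q+1)*\<eta>* t^2* ne
    = (\<eta>/(4* q)* nV + \<eta>* t* iVe - (t-s)* A* iVd + q*\<eta>* t^2* ne - 2* q* t*(t-s)* A* ied + q/\<eta>*(t-s)^2* A^2* nd)
      + \<kappa>*((s+1)/2* nw - (t-1)* iwd + (t-1)^2/(2*(s+1))* nd)
      + (E* ne + cx* ied + cx^2/(4* E)* nd)
      + \<kappa>* t/2* nwp + (s-1)*\<eta>/2* nw + \<eta>* t* s/2* ne + Z1* nd"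
  unfolding Z1 
  apply (simp add: algebra_simps)
  apply (simp add: E cx algebra_simps)
  apply (simp add: field_simps power2_eq_square)
  done

lemma core_II_id:
  fixes nV nwp nw nd ne iVe iVd iwd ied iwpd :: real
  assumes nz: "q \<noteq> 0" "\<eta> \<noteq> 0" "E \<noteq> 0"
    and E: "E = \<eta>*(2* q+1)* t^2/2"
    and rel: "\<kappa>*(t-1)* iwd = \<kappa>*\<mu>* t* iwpd - \<kappa>*\<mu>* iVd"
    and B: "B = (t-s)* A - \<kappa>*\<mu>"
    and cx: "cx = 2* q* t* B + \<eta>* t*(t-s)"
    and Z2: "Z2 = (2* q+1)*\<eta>*(t-1)^2 + \<kappa>*(s-1)*(t-1)/2 - \<kappa>* t*\<mu>^2/2 - \<eta>* t*(t-s)/2 - q/\<eta>* B^2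
              - cx^2/(4* E)"
  shows "\<eta>/(4* q)* nV + \<kappa>* t/2* nwp + ((s-1)*\<eta>/2 + \<kappa>*(s+1)/2)* nw
      + \<eta>* t* iVe - (t-s)* A* iVd - \<kappa>*(t-1)* iwd
      + ((2* q+1)*\<eta>*(t-1)^2 + \<kappa>*(s-1)*(t-1)/2)* nd - \<eta>* t*(t-s)/2*(nd - 2* ied + ne)
      + (2* q+1)*\<eta>* t^2* ne
    = (\<eta>/(4* q)* nV + \<eta>* t* iVe - B* iVd + q*\<eta>* t^2* ne - 2* q* t* B* ied + q/\<eta>* B^2* nd)
      + (\<kappa>* t/2* nwp - \<kappa>* t*\<mu>* iwpd + \<kappa>* t*\<mu>^2/2* nd)
      + (E* ne + cx* ied + cx^2/(4* E)* nd)
      + ((s-1)*\<eta>/2 + \<kappa>*(s+1)/2)* nw + \<eta>* t* s/2* ne + Z2* nd"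
  unfolding Z2 rel
  apply (simp add: algebra_simps)
  apply (simp add: E cx B algebra_simps)
  apply (simp add: field_simps power2_eq_square)
  done

lemma core:
  fixes V wp w d e :: "'a::real_inner"
  assumes s: "s > 2" and ts: "t \<ge> s + 1" and eta: "\<eta> > 0"
    and k0: "0 \<le> \<kappa>" and k16: "\<kappa> \<le> 16*\<eta>" and A0: "0 \<le> A" and A1: "A \<le> \<eta>"
    and q: "q = 2*(s-1)/(s-2)" and V: "V = t *\<^sub>R wp - (t-s) *\<^sub>R w"
  shows "0 \<le> \<eta>/(4* q)*(norm V)^2 + \<kappa>* t/2*(norm wp)^2 + ((s-1)*\<eta>/2 + \<kappa>*(s+1)/2)*(norm w)^2
      + \<eta>* t* inner V e - (t-s)* A* inner V d - \<kappa>*(t-1)* inner w d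
      + ((2* q+1)*\<eta>*(t-1)^2 + \<kappa>*(s-1)*(t-1)/2)*(norm d)^2 - \<eta>* t*(t-s)/2*(norm (d - e))^2
      + (2* q+1)*\<eta>* t^2*(norm e)^2"
proof -
  have qpos: "q > 0" using s q by simp
  have tpos: "t > 0" using s ts by simp
  define E where "E = \<eta>*(2* q+1)* t^2/2"
  have Epos: "E > 0" unfolding E_def using eta qpos tpos by simp
  have nde: "(norm (d - e))^2 = (norm d)^2 - 2* inner d e + (norm e)^2"
    unfolding power2_norm_eq_inner by (simp add: inner_diff_left inner_diff_right inner_commute)
  have ide: "inner d e = inner e d" by (simp add: inner_commute)
  show ?thesis
  proof (cases "t \<le> s^2 \<or> t \<le> s + 16")
    case True
    define cx where "cx = 2* q* t*(t-s)* A + \<eta>* t*(t-s)"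
    define Z1 where "Z1 = (2* q+1)*\<eta>*(t-1)^2 + \<kappa>*(s-1)*(t-1)/2 - \<eta>* t*(t-s)/2 - q/\<eta>*(t-s)^2* A^2
              - \<kappa>*(t-1)^2/(2*(s+1)) - cx^2/(4* E)"
    have F1: "0 \<le> \<eta>/(4* q)*(norm V)^2 + \<eta>* t* inner V e - (t-s)* A* inner V d + q*\<eta>* t^2*(norm e)^2
        - 2* q* t*(t-s)* A* inner e d + q/\<eta>*(t-s)^2* A^2*(norm d)^2"
    proof -
      have "0 \<le> \<eta>/(4* q)*(norm (V + (2* q* t) *\<^sub>R e + (-(2* q/\<eta>*(t-s)* A)) *\<^sub>R d))^2"
        using eta qpos by simp
      also have "... = \<eta>/(4* q)*(norm V)^2 + \<eta>* t* inner V e - (t-s)* A* inner V d + q*\<eta>* t^2*(norm e)^2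
        - 2* q* t*(t-s)* A* inner e d + q/\<eta>*(t-s)^2* A^2*(norm d)^2"
        unfolding sq3 using eta qpos by (simp add: field_simps power2_eq_square)
      finally show ?thesis .
    qed
    have F2: "0 \<le> \<kappa>*((s+1)/2*(norm w)^2 - (t-1)* inner w d + (t-1)^2/(2*(s+1))*(norm d)^2)"
    proof -
      have y: "0 \<le> ((s+1)/2)*(norm w)^2 - 2*((t-1)/2)* inner w d + ((t-1)/2)^2/((s+1)/2)*(norm d)^2"
        by (rule sq_young) (use s in simp)
      have c: "((t-1)/2)^2/((s+1)/2) = (t-1)^2/(2*(s+1))" using frac2[of "s+1" "t-1"] s by simp
      have y': "0 \<le> ((s+1)/2)*(norm w)^2 - 2*((t-1)/2)* inner w d + (t-1)^2/(2*(s+1))*(norm d)^2"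
        using y unfolding c .
      have c2: "2*((t-1)/2)* inner w d = (t-1)* inner w d" by simp
      have "0 \<le> (s+1)/2*(norm w)^2 - (t-1)* inner w d + (t-1)^2/(2*(s+1))*(norm d)^2"
        using y' c2 by linarith
      then show ?thesis using k0 by simp
    qed
    have F3: "0 \<le> E*(norm e)^2 + cx* inner e d + cx^2/(4* E)*(norm d)^2"
    proof -
      have "0 \<le> E*(norm (e + (cx/(2* E)) *\<^sub>R d))^2" using Epos by simp
      also have "... = E*(norm e)^2 + cx* inner e d + cx^2/(4* E)*(norm d)^2"
        unfolding sq2 using Epos by (simp add: field_simps power2_eq_square)
      finally show ?thesis .
    qed
    have Zeq: "Z1 = \<eta> * ((2* q+1)*(t-1)^2 + (\<kappa>/\<eta>)*(t-1)*((s-1) - (t-1)/(s+1))/2 - t*(t-s)/2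
              - q*(t-s)^2*(A/\<eta>)^2 - (t-s)^2*(2* q*(A/\<eta>)+1)^2/(2*(2* q+1)))"
    proof -
      have a: "\<kappa>*(s-1)*(t-1)/2 - \<kappa>*(t-1)^2/(2*(s+1)) = \<eta> * ((\<kappa>/\<eta>)*(t-1)*((s-1) - (t-1)/(s+1))/2)"
        by (rule zp1) (use s eta in simp_all)
      have b: "q/\<eta>*(t-s)^2* A^2 = \<eta>*(q*(t-s)^2*(A/\<eta>)^2)" by (rule zp2b) (use eta in simp)
      have c: "cx^2/(4* E) = \<eta>*((t-s)^2*(2* q*(A/\<eta>)+1)^2/(2*(2* q+1)))"
        unfolding cx_def E_def by (rule zp3) (use qpos eta tpos in simp_all)
      have dist: "\<eta> * ((2* q+1)*(t-1)^2 + (\<kappa>/\<eta>)*(t-1)*((s-1) - (t-1)/(s+1))/2 - t*(t-s)/2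
              - q*(t-s)^2*(A/\<eta>)^2 - (t-s)^2*(2* q*(A/\<eta>)+1)^2/(2*(2* q+1)))
          = (2* q+1)*\<eta>*(t-1)^2 + \<eta>*((\<kappa>/\<eta>)*(t-1)*((s-1) - (t-1)/(s+1))/2) - \<eta>* t*(t-s)/2
              - \<eta>*(q*(t-s)^2*(A/\<eta>)^2) - \<eta>*((t-s)^2*(2* q*(A/\<eta>)+1)^2/(2*(2* q+1)))"
        by (simp only: right_diff_distrib distrib_left) (simp add: algebra_simps)
      show ?thesis unfolding Z1_def dist using a b c by linarith
    qed
    have ZI': "0 \<le> (2* q+1)*(t-1)^2 + (\<kappa>/\<eta>)*(t-1)*((s-1) - (t-1)/(s+1))/2 - t*(t-s)/2
              - q*(t-s)^2*(A/\<eta>)^2 - (t-s)^2*(2* q*(A/\<eta>)+1)^2/(2*(2* q+1))"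
      using ZI[OF s ts _ _ _ _ q True, of "A/\<eta>" "\<kappa>/\<eta>"] eta A0 A1 k0 k16
      by (simp add: divide_le_eq)
    have Z1nn: "0 \<le> Z1" unfolding Zeq using ZI' eta by simp
    have F5: "0 \<le> Z1*(norm d)^2" using Z1nn by simp
    have F4: "0 \<le> \<kappa>* t/2*(norm wp)^2" "0 \<le> (s-1)*\<eta>/2*(norm w)^2" "0 \<le> \<eta>* t* s/2*(norm e)^2"
      using k0 tpos s eta by simp_all
    have id2: "\<eta>/(4* q)*(norm V)^2 + \<kappa>* t/2*(norm wp)^2 + ((s-1)*\<eta>/2 + \<kappa>*(s+1)/2)*(norm w)^2
      + \<eta>* t* inner V e - (t-s)* A* inner V d - \<kappa>*(t-1)* inner w d
      + ((2* q+1)*\<eta>*(t-1)^2 + \<kappa>*(s-1)*(t-1)/2)*(norm d)^2 - \<eta>* t*(t-s)/2*(norm (d - e))^2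
      + (2* q+1)*\<eta>* t^2*(norm e)^2
    = (\<eta>/(4* q)*(norm V)^2 + \<eta>* t* inner V e - (t-s)* A* inner V d + q*\<eta>* t^2*(norm e)^2
        - 2* q* t*(t-s)* A* inner e d + q/\<eta>*(t-s)^2* A^2*(norm d)^2)
      + \<kappa>*((s+1)/2*(norm w)^2 - (t-1)* inner w d + (t-1)^2/(2*(s+1))*(norm d)^2)
      + (E*(norm e)^2 + cx* inner e d + cx^2/(4* E)*(norm d)^2)
      + \<kappa>* t/2*(norm wp)^2 + (s-1)*\<eta>/2*(norm w)^2 + \<eta>* t* s/2*(norm e)^2 + Z1*(norm d)^2"
      unfolding nde ide
      by (rule core_I_id) (use qpos eta s Epos tpos in \<open>simp_all add: E_def cx_def Z1_def\<close>)
    show ?thesis unfolding id2 using F1 F2 F3 F4 F5 by linarith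
  next
    case False
    then have t1: "t > s^2" and t2: "t > s + 16" by auto
    define \<mu> where "\<mu> = (t-1)/(t-s)"
    define B where "B = (t-s)* A - \<kappa>*\<mu>"
    define cx where "cx = 2* q* t* B + \<eta>* t*(t-s)"
    define Z2 where "Z2 = (2* q+1)*\<eta>*(t-1)^2 + \<kappa>*(s-1)*(t-1)/2 - \<kappa>* t*\<mu>^2/2 - \<eta>* t*(t-s)/2 - q/\<eta>* B^2
              - cx^2/(4* E)"
    have tsp: "t - s > 0" using ts by simp
    have F1: "0 \<le> \<eta>/(4* q)*(norm V)^2 + \<eta>* t* inner V e - B* inner V d + q*\<eta>* t^2*(norm e)^2
        - 2* q* t* B* inner e d + q/\<eta>* B^2*(norm d)^2"
    proof -
      have "0 \<le> \<eta>/(4* q)*(norm (V + (2* q* t) *\<^sub>R e + (-(2* q/\<eta>* B)) *\<^sub>R d))^2"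
        using eta qpos by simp
      also have "... = \<eta>/(4* q)*(norm V)^2 + \<eta>* t* inner V e - B* inner V d + q*\<eta>* t^2*(norm e)^2
        - 2* q* t* B* inner e d + q/\<eta>* B^2*(norm d)^2"
        unfolding sq3 using eta qpos by (simp add: field_simps power2_eq_square)
      finally show ?thesis .
    qed
    have F2: "0 \<le> \<kappa>* t/2*(norm wp)^2 - \<kappa>* t*\<mu>* inner wp d + \<kappa>* t*\<mu>^2/2*(norm d)^2"
    proof -
      have "0 \<le> \<kappa>* t/2*(norm (wp + (-\<mu>) *\<^sub>R d))^2" using k0 tpos by simp
      also have "... = \<kappa>* t/2*(norm wp)^2 - \<kappa>* t*\<mu>* inner wp d + \<kappa>* t*\<mu>^2/2*(norm d)^2"
        unfolding sq2 by (simp add: field_simps power2_eq_square)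
      finally show ?thesis .
    qed
    have F3: "0 \<le> E*(norm e)^2 + cx* inner e d + cx^2/(4* E)*(norm d)^2"
    proof -
      have "0 \<le> E*(norm (e + (cx/(2* E)) *\<^sub>R d))^2" using Epos by simp
      also have "... = E*(norm e)^2 + cx* inner e d + cx^2/(4* E)*(norm d)^2"
        unfolding sq2 using Epos by (simp add: field_simps power2_eq_square)
      finally show ?thesis .
    qed
    have rel: "\<kappa>*(t-1)* inner w d = \<kappa>*\<mu>* t* inner wp d - \<kappa>*\<mu>* inner V d"
    proof -
      have iV: "inner V d = t* inner wp d - (t-s)* inner w d" unfolding V by (simp add: inner_diff_left)
      have mu_ts: "\<mu>*(t-s) = t-1" unfolding \<mu>_def using tsp by simp
      have "\<kappa>*\<mu>* t* inner wp d - \<kappa>*\<mu>* inner V d = \<kappa>*\<mu>*(t* inner wp d - inner V d)"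
        by (simp add: algebra_simps)
      also have "... = \<kappa>*(\<mu>*(t-s))* inner w d" using iV by simp
      also have "... = \<kappa>*(t-1)* inner w d" unfolding mu_ts ..
      finally show ?thesis by simp
    qed
    have blo: "-(t-1) \<le> B/\<eta>"
    proof -
      have km: "\<kappa>*\<mu> \<le> 16*\<eta>*\<mu>" using k16 tsp s ts unfolding \<mu>_def by (intro mult_right_mono) simp_all
      have m: "(t-1)*16 \<le> (t-1)*(t-s)" using t2 s by (intro mult_left_mono) simp_all
      have "16*\<mu> \<le> t - 1" unfolding \<mu>_def using tsp m
        by (simp add: divide_le_eq)
      then have "16*\<eta>*\<mu> \<le> \<eta>*(t-1)" using eta by (simp add: mult.assoc mult_left_mono mult.commute)
      with km have "\<kappa>*\<mu> \<le> \<eta>*(t-1)" by linarith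
      moreover have "0 \<le> (t-s)* A" using tsp A0 by simp
      ultimately have "-(\<eta>*(t-1)) \<le> B" unfolding B_def by simp
      moreover have "(1 - t) * \<eta> = -(\<eta>*(t-1))" by (simp add: algebra_simps)
      ultimately show ?thesis using eta by (simp add: le_divide_eq)
    qed
    have bhi: "B/\<eta> \<le> t - s"
    proof -
      have "0 \<le> \<kappa>*\<mu>" using k0 tsp s ts unfolding \<mu>_def by simp
      moreover have "(t-s)* A \<le> (t-s)*\<eta>" using A1 tsp by simp
      ultimately have "B \<le> (t-s)*\<eta>" unfolding B_def by simp
      then show ?thesis using eta by (simp add: divide_le_eq)
    qed
    have Zeq: "Z2 = \<eta> * ((2* q+1)*(t-1)^2 + (\<kappa>/\<eta>)*(s-1)*(t-1)/2 - (\<kappa>/\<eta>)* t*\<mu>^2/2 - t*(t-s)/2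
              - q*(B/\<eta>)^2 - (2* q*(B/\<eta>) + (t-s))^2/(2*(2* q+1)))"
    proof -
      have b: "q/\<eta>* B^2 = \<eta>*(q*(B/\<eta>)^2)" by (rule zp2) (use eta in simp)
      have c: "cx^2/(4* E) = \<eta>*((2* q*(B/\<eta>) + (t-s))^2/(2*(2* q+1)))"
        unfolding cx_def E_def by (rule zp4) (use qpos eta tpos in simp_all)
      have d: "\<eta>*((\<kappa>/\<eta>)*(s-1)*(t-1)/2) = \<kappa>*(s-1)*(t-1)/2" "\<eta>*((\<kappa>/\<eta>)* t*\<mu>^2/2) = \<kappa>* t*\<mu>^2/2"
        using eta by simp_all
      have dist: "\<eta> * ((2* q+1)*(t-1)^2 + (\<kappa>/\<eta>)*(s-1)*(t-1)/2 - (\<kappa>/\<eta>)* t*\<mu>^2/2 - t*(t-s)/2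
              - q*(B/\<eta>)^2 - (2* q*(B/\<eta>) + (t-s))^2/(2*(2* q+1)))
          = (2* q+1)*\<eta>*(t-1)^2 + \<eta>*((\<kappa>/\<eta>)*(s-1)*(t-1)/2) - \<eta>*((\<kappa>/\<eta>)* t*\<mu>^2/2) - \<eta>* t*(t-s)/2
              - \<eta>*(q*(B/\<eta>)^2) - \<eta>*((2* q*(B/\<eta>) + (t-s))^2/(2*(2* q+1)))"
        by (simp only: right_diff_distrib distrib_left) (simp add: algebra_simps)
      show ?thesis unfolding Z2_def dist using b c d by linarith
    qed
    have ZII': "0 \<le> (2* q+1)*(t-1)^2 + (\<kappa>/\<eta>)*(s-1)*(t-1)/2 - (\<kappa>/\<eta>)* t*\<mu>^2/2 - t*(t-s)/2
              - q*(B/\<eta>)^2 - (2* q*(B/\<eta>) + (t-s))^2/(2*(2* q+1))"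
      using ZII[OF s t1 t2 _ _ q blo bhi \<mu>_def, of "\<kappa>/\<eta>"] eta k0 k16
      by (simp add: divide_le_eq)
    have Z2nn: "0 \<le> Z2" unfolding Zeq using ZII' eta by simp
    have F5: "0 \<le> Z2*(norm d)^2" using Z2nn by simp
    have F4: "0 \<le> ((s-1)*\<eta>/2 + \<kappa>*(s+1)/2)*(norm w)^2" "0 \<le> \<eta>* t* s/2*(norm e)^2"
      using k0 tpos s eta by simp_all
    have id2: "\<eta>/(4* q)*(norm V)^2 + \<kappa>* t/2*(norm wp)^2 + ((s-1)*\<eta>/2 + \<kappa>*(s+1)/2)*(norm w)^2
      + \<eta>* t* inner V e - (t-s)* A* inner V d - \<kappa>*(t-1)* inner w d
      + ((2* q+1)*\<eta>*(t-1)^2 + \<kappa>*(s-1)*(t-1)/2)*(norm d)^2 - \<eta>* t*(t-s)/2*(norm (d - e))^2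
      + (2* q+1)*\<eta>* t^2*(norm e)^2
    = (\<eta>/(4* q)*(norm V)^2 + \<eta>* t* inner V e - B* inner V d + q*\<eta>* t^2*(norm e)^2
        - 2* q* t* B* inner e d + q/\<eta>* B^2*(norm d)^2)
      + (\<kappa>* t/2*(norm wp)^2 - \<kappa>* t*\<mu>* inner wp d + \<kappa>* t*\<mu>^2/2*(norm d)^2)
      + (E*(norm e)^2 + cx* inner e d + cx^2/(4* E)*(norm d)^2)
      + ((s-1)*\<eta>/2 + \<kappa>*(s+1)/2)*(norm w)^2 + \<eta>* t* s/2*(norm e)^2 + Z2*(norm d)^2"
      unfolding nde ide
      by (rule core_II_id) (use qpos eta Epos rel tpos in \<open>simp_all add: E_def cx_def Z2_def B_def\<close>)
    show ?thesis unfolding id2 using F1 F2 F3 F4 F5 by linarith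
  qed
qed
lemma S1_id:
  fixes w wp u up d r :: "'a::real_inner"
  assumes nz: "T \<noteq> 0" "s \<noteq> 0" "K \<noteq> 0"
    and hb: "\<beta> = (A*(T-s) - K)/T"
    and hc: "cg = s^2*(s-1)/(2* K) + cr"
  shows "(ak/2*(norm w)^2 + s*(T-1)* inner w d + cg*(norm r)^2)
      - (ak1/2*(norm wp)^2 + s* T* inner wp (((T-s)/T) *\<^sub>R d - \<eta> *\<^sub>R up + (\<beta> + K/s) *\<^sub>R u)
         + s^2*(s-1)/(2* K)*(norm (r - (K/s) *\<^sub>R u))^2)
    = s*(s-1)* inner w (d + r) + T*(T-s)* inner (wp - w) (-(s/T) *\<^sub>R d - \<eta> *\<^sub>R up + \<beta> *\<^sub>R u)
      + (ak/2*(norm w)^2 - ak1/2*(norm wp)^2 + \<eta>* T^2* inner wp up - \<eta>* T*(T-s)* inner w up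
         - T*(T-s)* A* inner wp u + \<beta>* T*(T-s)* inner w u + cr*(norm r)^2 + s*(s-1)* inner r (u - w)
         - (s-1)* K/2*(norm u)^2)"
  unfolding hb hc power2_norm_eq_inner
  apply (simp add: inner_add_left inner_add_right inner_diff_left inner_diff_right inner_commute)
  by (simp add: field_simps nz power2_eq_square)

lemma W_eq_Q':
  fixes w wp hp d e1 :: "'a::real_inner"
  assumes D1: "D1 = s - 1" and D2: "D2 = s - 2" and nz: "D1 \<noteq> 0" "D2 \<noteq> 0" "t \<noteq> 0"
    and hA: "A = (s-2)*\<eta>/(4*(s-1)) + 2*\<rho>"
    and hak: "ak = (\<eta> - A)*(t-1)^2 + 2* s*\<rho>*(t-1) - \<gamma>*(t-2)"
    and hak1: "ak1 = (\<eta> - A)* t^2 + 2* s*\<rho>* t - \<gamma>*(t-1)"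
    and hK: "K = \<gamma>*(t-1)/t"
    and hphi: "phi = ((s-2)/2*\<eta> - 4*(s-1)*\<rho> - 3*\<gamma>)*(t-1) + (s-1)*(s-2)*\<eta>/4 + 2*(2* s^2-3* s+1)*\<rho> + \<gamma>"
    and hvphi: "vphi = 2*(5* s-6)*\<eta>/(s-2) + (s-1)*\<gamma>"
    and hq: "q = 2*(s-1)/(s-2)"
  shows "-(t*(t-s)*\<rho>)*(norm (wp - w))^2
     + ak/2*(norm w)^2 - ak1/2*(norm wp)^2
     + \<eta>* t^2* inner wp (hp + e1) - \<eta>* t*(t-s)* inner w (hp + e1)
     - t*(t-s)* A* inner wp (w + d)
     + (A*(t-s) - K)*(t-s)* inner w (w + d)
     - (s-1)* K/2*(norm (w + d))^2
     - (s-1)*\<gamma>*(t-1)*(t-2)/2*(norm d)^2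
     - \<eta>* t*(t-s)* m/2*(norm (w - hp))^2 - \<eta>* t*(t-s)/2*(norm (d - e1))^2
     + \<eta>* t^2/2*(norm (wp - hp))^2 - \<eta>* t*(t-s)/2*(1-m)*(norm (hp - w))^2 - \<eta>* s* t/2*(norm hp)^2
     - phi/2*(norm w)^2
     + vphi*(t-1)^2/2*(norm d)^2
     + (5* s-6)*\<eta>* t^2/(s-2)*(norm e1)^2
   = \<eta>/(4* q)*(norm (t *\<^sub>R wp - (t-s) *\<^sub>R w))^2 + K* t/2*(norm wp)^2
     + ((s-1)*\<eta>/2 + K*(s+1)/2)*(norm w)^2
     + \<eta>* t* inner (t *\<^sub>R wp - (t-s) *\<^sub>R w) e1 - (t-s)* A* inner (t *\<^sub>R wp - (t-s) *\<^sub>R w) d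
     - K*(t-1)* inner w d
     + ((2* q+1)*\<eta>*(t-1)^2 + K*(s-1)*(t-1)/2)*(norm d)^2
     - \<eta>* t*(t-s)/2*(norm (d - e1))^2 + (2* q+1)*\<eta>* t^2*(norm e1)^2"
proof -
  have e1: "(s-2)*\<eta>/(4*(s-1)) = (s-2)*\<eta>/(4* D1)" "2*(5* s-6)*\<eta>/(s-2) = 2*(5* s-6)*\<eta>/D2"
    "(5* s-6)*\<eta>* t^2/(s-2) = (5* s-6)*\<eta>* t^2/D2" "2*(s-1)/(s-2) = 2* D1/D2" using D1 D2 by simp_all
  show ?thesis
    unfolding hak hak1 hphi hvphi hq hK hA e1 power2_norm_eq_inner
    apply (simp add: inner_add_left inner_add_right inner_diff_left inner_diff_right inner_commute)
    apply (simp add: field_simps nz power2_eq_square)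
    apply (simp only: D1 D2)
    apply algebra
    done
qed
lemma sq_sum_le: fixes a b :: "'a::real_inner"
  shows "(norm (a + b))^2 \<le> 2*(norm a)^2 + 2*(norm b)^2"
proof -
  have "(norm (a + b))^2 + (norm (a - b))^2 = 2*(norm a)^2 + 2*(norm b)^2"
    unfolding power2_norm_eq_inner
    by (simp add: inner_add_left inner_add_right inner_diff_left inner_diff_right inner_commute)
  moreover have "0 \<le> (norm (a - b))^2" by simp
  ultimately show ?thesis by linarith
qed

lemma xh1: fixes a b :: "'a::real_vector" assumes "T \<noteq> 0"
  shows "((T-s)/T) *\<^sub>R a + (s/T) *\<^sub>R b - b = ((T-s)/T) *\<^sub>R (a - b)"
proof -
  have e: "s/T - 1 = -((T-s)/T)" using assms by (simp add: field_simps)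
  have "((T-s)/T) *\<^sub>R a + (s/T) *\<^sub>R b - b = ((T-s)/T) *\<^sub>R a + (s/T - 1) *\<^sub>R b"
    by (simp add: scaleR_left_diff_distrib)
  also have "... = ((T-s)/T) *\<^sub>R (a - b)" unfolding e by (simp add: scaleR_right_diff_distrib)
  finally show ?thesis .
qed

lemma xh2: fixes a b :: "'a::real_vector" assumes "T \<noteq> 0"
  shows "((T-s)/T) *\<^sub>R a + (s/T) *\<^sub>R b - a = -(s/T) *\<^sub>R (a - b)"
proof -
  have e: "(T-s)/T - 1 = -(s/T)" using assms by (simp add: field_simps)
  have "((T-s)/T) *\<^sub>R a + (s/T) *\<^sub>R b - a = ((T-s)/T - 1) *\<^sub>R a + (s/T) *\<^sub>R b"
    by (simp add: scaleR_left_diff_distrib)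
  also have "... = -(s/T) *\<^sub>R (a - b)" unfolding e by (simp add: scaleR_right_diff_distrib)
  finally show ?thesis .
qed

lemma half8: fixes x y :: real assumes "y \<noteq> 0" shows "x/(8* y) + x/(8* y) = x/(4* y)"
  using assms by (simp add: field_simps)

lemma gk_lemma: fixes a1 a2 T \<gamma> :: real
  assumes "a1 \<noteq> 0" "a2 \<noteq> 0" "T \<noteq> 0" "\<gamma> \<noteq> 0" "a1 = T - 1" "a2 = T - 2"
  shows "s^2*(s-1)/(2*(\<gamma>* a2/a1)) = s^2*(s-1)/(2*(\<gamma>* a1/T)) + s^2*(s-1)/(2*\<gamma>* a1* a2)"
proof -
  have "s^2*(s-1)/(2*(\<gamma>* a2/a1)) - s^2*(s-1)/(2*(\<gamma>* a1/T)) - s^2*(s-1)/(2*\<gamma>* a1* a2)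
      = s^2*(s-1)*(a1^2 - T* a2 - 1)/(2*\<gamma>* a1* a2)"
    using assms(1-4) by (simp add: field_simps power2_eq_square)
  also have "a1^2 - T* a2 - 1 = 0" unfolding assms(5) assms(6) by (simp add: power2_eq_square algebra_simps)
  finally show ?thesis by simp
qed

lemma step_lemma:
  fixes xk zk xk1 zk1 yk xs wk wk1 hk hk1 ek ekm u up Gx1 Gy :: "'a::real_inner"
    and s \<eta> \<gamma> \<rho>n \<rho>c \<alpha> L \<omega> M2 T Tm ak ak1 \<beta> K gkm psi c1 c2 Pk Pk1 EGx EGy phi vphi :: real
  assumes s: "s > 2" and eta: "\<eta> > 0" and g0: "\<gamma> > 0" and g16: "\<gamma> < 16*\<eta>" and om: "\<omega> \<ge> 0"
    and rn: "\<rho>n \<ge> 0" and rho_cond: "(3* s-2)*\<eta> \<ge> 8*(s-1)*\<rho>n"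
    and T: "T \<ge> s + 1" and Tm: "Tm = T - 1"
    and stp: "M2*\<eta>^2* T/(T-s) \<le> 1" and M2: "M2 = 2*(1+\<omega>)* L^2"
    and c1: "c1 = (s-2)/(8*(s-1))" and c2: "c2 = (s-2)/(8*(s-1))"
    and psi: "psi = (1 - c1 - c2)*\<eta> - 2*\<rho>n"
    and hK: "K = \<gamma>*(T-1)/T" and hgkm: "gkm = \<gamma>*(Tm-1)/Tm"
    and hb: "\<beta> = ((c1*\<eta> + c2*\<eta> + 2*\<rho>n)*(T-s) - K)/T"
    and hak: "ak = psi* Tm^2 + 2* s*\<rho>n* Tm - \<gamma>*(Tm-1)"
    and hak1: "ak1 = psi* T^2 + 2* s*\<rho>n* T - \<gamma>*(T-1)"
    and hphi: "phi = ((s-2)/2*\<eta> - 4*(s-1)*\<rho>n - 3*\<gamma>)*(T-1) + (s-1)*(s-2)*\<eta>/4 + 2*(2* s^2-3* s+1)*\<rho>n + \<gamma>"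
    and hvphi: "vphi = 2*(5* s-6)*\<eta>/(s-2) + (s-1)*\<gamma>"
    and hPk: "Pk = ak/2*(norm wk)^2 + s* Tm* inner wk (xk - zk) + s^2*(s-1)/(2* gkm)*(norm (zk - xs))^2"
    and hPk1: "Pk1 = ak1/2*(norm wk1)^2 + s* T* inner wk1 (xk1 - zk1) + s^2*(s-1)/(2* K)*(norm (zk1 - xs))^2"
    and hu: "u = hk + ekm" and hup: "up = hk1 + ek"
    and v1: "xk1 - zk1 = ((T-s)/T) *\<^sub>R (xk - zk) - \<eta> *\<^sub>R up + (\<beta> + K/s) *\<^sub>R u"
    and v2: "zk1 - xs = (zk - xs) - (K/s) *\<^sub>R u"
    and v3: "xk1 - xk = -(s/T) *\<^sub>R (xk - zk) - \<eta> *\<^sub>R up + \<beta> *\<^sub>R u"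
    and v4: "xk1 - yk = \<eta> *\<^sub>R (u - up)"
    and v5: "Gx1 - Gy = wk1 - hk1"
    and mono: "inner (wk1 - wk) (xk1 - xk) \<ge> -\<rho>n*(norm (wk1 - wk))^2 + \<rho>c* EGx"
    and lip: "\<alpha>*(norm (Gx1 - Gy))^2 + (1-\<alpha>)* EGy \<le> L^2*(norm (xk1 - yk))^2"
  shows "Pk - Pk1 \<ge> \<eta>* T^2/2*((1-\<alpha>)*(EGy - (norm (Gx1 - Gy))^2) + \<omega>* L^2*(norm (xk1 - yk))^2)
        + \<rho>c* T*(T-s)* EGx
        + \<eta>* T*(T-s)/2*(1 - M2*\<eta>^2* T/(T-s))*(norm (hk1 - wk))^2
        + \<eta>* s* T/2*(norm hk1)^2
        + phi/2*(norm wk)^2 + s*(s-1)* inner wk (xk - xs)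
        - vphi* Tm^2*(norm (wk - hk))^2
        - (5* s-6)*\<eta>* T^2/(s-2)*(norm ek)^2
        - vphi* Tm^2*(norm ekm)^2"
proof -
  have Tpos: "T > 0" and Tsp: "T - s > 0" and T1: "T - 1 > 0" and T2: "T - 2 > 0" using s T by simp_all
  have s1: "s - 1 > 0" using s by simp
  have ns: "s - 1 \<noteq> 0" "s - 2 \<noteq> 0" "T \<noteq> 0" using s T by simp_all
  define A where "A = (s-2)*\<eta>/(4*(s-1)) + 2*\<rho>n"
  have cc: "c1 + c2 = (s-2)/(4*(s-1))" unfolding c1 c2 using half8[of "s-1" "s-2"] s by simp
  have cA: "c1*\<eta> + c2*\<eta> + 2*\<rho>n = A"
  proof -
    have "c1*\<eta> + c2*\<eta> = (c1 + c2)*\<eta>" by (simp add: algebra_simps)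
    then show ?thesis unfolding A_def cc by simp
  qed
  have psiA: "psi = \<eta> - A"
  proof -
    have "psi = \<eta> - (c1*\<eta> + c2*\<eta> + 2*\<rho>n)" unfolding psi by (simp add: algebra_simps)
    then show ?thesis using cA by simp
  qed
  have A0: "0 \<le> A" unfolding A_def using s eta rn by simp
  have A1: "A \<le> \<eta>"
  proof -
    have "2*\<rho>n \<le> (3* s-2)*\<eta>/(4*(s-1))" using rho_cond s by (simp add: field_simps)
    moreover have "(s-2)*\<eta>/(4*(s-1)) + (3* s-2)*\<eta>/(4*(s-1)) = \<eta>"
    proof -
      have "(s-2)*\<eta>/(4*(s-1)) + (3* s-2)*\<eta>/(4*(s-1)) = ((s-2)*\<eta> + (3* s-2)*\<eta>)/(4*(s-1))"
        by (simp add: add_divide_distrib)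
      also have "(s-2)*\<eta> + (3* s-2)*\<eta> = (4*(s-1))*\<eta>" by (simp add: algebra_simps)
      finally show ?thesis using s by simp
    qed
    ultimately show ?thesis unfolding A_def by linarith
  qed
  have hb': "\<beta> = (A*(T-s) - K)/T" using hb cA by simp
  have bT: "\<beta>* T = A*(T-s) - K" using hb' Tpos by simp
  have K0: "0 \<le> K" unfolding hK using g0 T1 Tpos by simp
  have K16: "K \<le> 16*\<eta>"
  proof -
    have "K \<le> \<gamma>" unfolding hK using g0 Tpos by (simp add: divide_le_eq)
    then show ?thesis using g16 by simp
  qed
  have Kpos: "K > 0" unfolding hK using g0 T1 Tpos by simp
  define m where "m = M2*\<eta>^2* T/(T-s)"
  have m0: "0 \<le> m" unfolding m_def M2 using om Tpos Tsp by simp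
  have m1: "m \<le> 1" unfolding m_def using stp .
  obtain \<delta> where \<delta>: "u = wk + \<delta>" by (rule that[of "u - wk"]) simp
  define d where "d = xk - zk"
  define r where "r = zk - xs"
  define cr where "cr = s^2*(s-1)/(2*\<gamma>*(T-1)*(T-2))"
  have crpos: "cr > 0" unfolding cr_def using s g0 T1 T2 by simp
  have gk_rel: "s^2*(s-1)/(2* gkm) = s^2*(s-1)/(2* K) + cr"
  proof -
    have e: "gkm = \<gamma>*(T-2)/(T-1)" unfolding hgkm Tm by simp
    show ?thesis unfolding e hK cr_def
      by (rule gk_lemma) (use g0 T1 T2 Tpos in simp_all)
  qed
  have S1: "Pk - Pk1 = s*(s-1)* inner wk (xk - xs) + T*(T-s)* inner (wk1 - wk) (xk1 - xk)
      + (ak/2*(norm wk)^2 - ak1/2*(norm wk1)^2 + \<eta>* T^2* inner wk1 up - \<eta>* T*(T-s)* inner wk up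
         - T*(T-s)* A* inner wk1 u + \<beta>* T*(T-s)* inner wk u + cr*(norm r)^2 + s*(s-1)* inner r (u - wk)
         - (s-1)* K/2*(norm u)^2)"
  proof -
    have xx: "xk - xs = d + r" unfolding d_def r_def by simp
    have "Pk - Pk1 = (ak/2*(norm wk)^2 + s*(T-1)* inner wk d + (s^2*(s-1)/(2* K) + cr)*(norm r)^2)
      - (ak1/2*(norm wk1)^2 + s* T* inner wk1 (((T-s)/T) *\<^sub>R d - \<eta> *\<^sub>R up + (\<beta> + K/s) *\<^sub>R u)
         + s^2*(s-1)/(2* K)*(norm (r - (K/s) *\<^sub>R u))^2)"
      unfolding hPk hPk1 v1 v2 gk_rel Tm d_def r_def by simp
    also have "... = s*(s-1)* inner wk (d + r) + T*(T-s)* inner (wk1 - wk) (-(s/T) *\<^sub>R d - \<eta> *\<^sub>R up + \<beta> *\<^sub>R u)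
      + (ak/2*(norm wk)^2 - ak1/2*(norm wk1)^2 + \<eta>* T^2* inner wk1 up - \<eta>* T*(T-s)* inner wk up
         - T*(T-s)* A* inner wk1 u + \<beta>* T*(T-s)* inner wk u + cr*(norm r)^2 + s*(s-1)* inner r (u - wk)
         - (s-1)* K/2*(norm u)^2)"
      by (rule S1_id) (use Tpos s Kpos hb' in simp_all)
    finally show ?thesis unfolding xx v3 d_def .
  qed

  have M': "T*(T-s)* inner (wk1 - wk) (xk1 - xk) \<ge> -(T*(T-s)*\<rho>n)*(norm (wk1 - wk))^2 + \<rho>c* T*(T-s)* EGx"
  proof -
    have "T*(T-s)*(-\<rho>n*(norm (wk1 - wk))^2 + \<rho>c* EGx) \<le> T*(T-s)* inner (wk1 - wk) (xk1 - xk)"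
      using mono Tpos Tsp by (intro mult_left_mono) simp_all
    then show ?thesis by (simp add: algebra_simps)
  qed
  have N2: "(norm (xk1 - yk))^2 = \<eta>^2*(norm (u - up))^2" unfolding v4 by (simp add: power_mult_distrib)
  have N1: "(norm (Gx1 - Gy))^2 = (norm (wk1 - hk1))^2" unfolding v5 ..
  have Lf: "\<eta>* T^2/2*((1-\<alpha>)*(EGy - (norm (Gx1 - Gy))^2) + \<omega>* L^2*(norm (xk1 - yk))^2)
      \<le> \<eta>* T*(T-s)* m/4*(norm (u - up))^2 - \<eta>* T^2/2*(norm (wk1 - hk1))^2"
  proof -
    have a: "(1-\<alpha>)*(EGy - (norm (Gx1 - Gy))^2) + \<omega>* L^2*(norm (xk1 - yk))^2
        \<le> (1+\<omega>)* L^2*(norm (xk1 - yk))^2 - (norm (Gx1 - Gy))^2"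
      using lip by (simp add: algebra_simps)
    have b: "\<eta>* T^2/2*((1-\<alpha>)*(EGy - (norm (Gx1 - Gy))^2) + \<omega>* L^2*(norm (xk1 - yk))^2)
        \<le> \<eta>* T^2/2*((1+\<omega>)* L^2*(norm (xk1 - yk))^2 - (norm (Gx1 - Gy))^2)"
      using a eta by (intro mult_left_mono) simp_all
    have c: "\<eta>* T^2/2*((1+\<omega>)* L^2*(norm (xk1 - yk))^2 - (norm (Gx1 - Gy))^2)
        = \<eta>* T*(T-s)* m/4*(norm (u - up))^2 - \<eta>* T^2/2*(norm (wk1 - hk1))^2"
      unfolding N1 N2 m_def M2 using Tsp by (simp add: field_simps power2_eq_square)
    show ?thesis using b c by simp
  qed
  have Yr: "cr*(norm r)^2 + s*(s-1)* inner r \<delta> \<ge> -((s-1)*\<gamma>*(T-1)*(T-2)/2*(norm \<delta>)^2)"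
  proof -
    have y: "0 \<le> cr*(norm r)^2 - 2*(-(s*(s-1)/2))* inner r \<delta> + (-(s*(s-1)/2))^2/cr*(norm \<delta>)^2"
      by (rule sq_young) (rule crpos)
    have e: "(-(s*(s-1)/2))^2/cr = (s-1)*\<gamma>*(T-1)*(T-2)/2" unfolding cr_def using s g0 T1 T2
      by (simp add: field_simps power2_eq_square)
    have e2: "2*(-(s*(s-1)/2))* inner r \<delta> = -(s*(s-1)* inner r \<delta>)" by simp
    show ?thesis using y unfolding e e2 by simp
  qed
  have uu: "u - up = (wk - hk1) + (\<delta> - ek)" unfolding \<delta> hup by simp
  have Y2: "\<eta>* T*(T-s)* m/4*(norm (u - up))^2 \<le> \<eta>* T*(T-s)* m/2*(norm (wk - hk1))^2 + \<eta>* T*(T-s)* m/2*(norm (\<delta> - ek))^2"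
  proof -
    have "\<eta>* T*(T-s)* m/4*(norm (u - up))^2 \<le> \<eta>* T*(T-s)* m/4*(2*(norm (wk - hk1))^2 + 2*(norm (\<delta> - ek))^2)"
      unfolding uu using sq_sum_le eta Tpos Tsp m0 by (intro mult_left_mono) simp_all
    moreover have "\<eta>* T*(T-s)* m/4*(2*(norm (wk - hk1))^2 + 2*(norm (\<delta> - ek))^2)
        = \<eta>* T*(T-s)* m/2*(norm (wk - hk1))^2 + \<eta>* T*(T-s)* m/2*(norm (\<delta> - ek))^2"
      by (simp add: field_simps)
    ultimately show ?thesis by simp
  qed
  have Y3: "\<eta>* T*(T-s)* m/2*(norm (\<delta> - ek))^2 \<le> \<eta>* T*(T-s)/2*(norm (\<delta> - ek))^2"
  proof -
    have "m*(\<eta>* T*(T-s)/2*(norm (\<delta> - ek))^2) \<le> 1*(\<eta>* T*(T-s)/2*(norm (\<delta> - ek))^2)"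
      using m1 eta Tpos Tsp by (intro mult_right_mono) simp_all
    then show ?thesis by (simp add: algebra_simps)
  qed
  have vphipos: "vphi \<ge> 0" unfolding hvphi using s eta g0 by simp
  have Y4: "vphi* Tm^2*(norm (wk - hk))^2 + vphi* Tm^2*(norm ekm)^2 \<ge> vphi*(T-1)^2/2*(norm \<delta>)^2"
  proof -
    have dd: "\<delta> = (hk - wk) + ekm" using \<delta> hu by (metis add_diff_cancel_left' add_diff_eq diff_add_eq)
    have "(norm \<delta>)^2 \<le> 2*(norm (hk - wk))^2 + 2*(norm ekm)^2" unfolding dd by (rule sq_sum_le)
    moreover have "norm (hk - wk) = norm (wk - hk)" by (rule norm_minus_commute)
    ultimately have "(norm \<delta>)^2 \<le> 2*(norm (wk - hk))^2 + 2*(norm ekm)^2" by simp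
    then have "vphi* Tm^2/2*(norm \<delta>)^2 \<le> vphi* Tm^2/2*(2*(norm (wk - hk))^2 + 2*(norm ekm)^2)"
      using vphipos by (intro mult_left_mono) simp_all
    then show ?thesis unfolding Tm by (simp add: algebra_simps)
  qed
  have hakA: "ak = (\<eta> - A)*(T-1)^2 + 2* s*\<rho>n*(T-1) - \<gamma>*(T-2)" unfolding hak psiA Tm by simp
  have hak1A: "ak1 = (\<eta> - A)* T^2 + 2* s*\<rho>n* T - \<gamma>*(T-1)" unfolding hak1 psiA by simp
  define q where "q = 2*(s-1)/(s-2)"
  have WQ': "-(T*(T-s)*\<rho>n)*(norm (wk1 - wk))^2
     + ak/2*(norm wk)^2 - ak1/2*(norm wk1)^2
     + \<eta>* T^2* inner wk1 (hk1 + ek) - \<eta>* T*(T-s)* inner wk (hk1 + ek)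
     - T*(T-s)* A* inner wk1 (wk + \<delta>)
     + (A*(T-s) - K)*(T-s)* inner wk (wk + \<delta>)
     - (s-1)* K/2*(norm (wk + \<delta>))^2
     - (s-1)*\<gamma>*(T-1)*(T-2)/2*(norm \<delta>)^2
     - \<eta>* T*(T-s)* m/2*(norm (wk - hk1))^2 - \<eta>* T*(T-s)/2*(norm (\<delta> - ek))^2
     + \<eta>* T^2/2*(norm (wk1 - hk1))^2 - \<eta>* T*(T-s)/2*(1-m)*(norm (hk1 - wk))^2 - \<eta>* s* T/2*(norm hk1)^2
     - phi/2*(norm wk)^2
     + vphi*(T-1)^2/2*(norm \<delta>)^2
     + (5* s-6)*\<eta>* T^2/(s-2)*(norm ek)^2
   = \<eta>/(4* q)*(norm (T *\<^sub>R wk1 - (T-s) *\<^sub>R wk))^2 + K* T/2*(norm wk1)^2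
     + ((s-1)*\<eta>/2 + K*(s+1)/2)*(norm wk)^2
     + \<eta>* T* inner (T *\<^sub>R wk1 - (T-s) *\<^sub>R wk) ek - (T-s)* A* inner (T *\<^sub>R wk1 - (T-s) *\<^sub>R wk) \<delta>
     - K*(T-1)* inner wk \<delta>
     + ((2* q+1)*\<eta>*(T-1)^2 + K*(s-1)*(T-1)/2)*(norm \<delta>)^2
     - \<eta>* T*(T-s)/2*(norm (\<delta> - ek))^2 + (2* q+1)*\<eta>* T^2*(norm ek)^2"
    by (rule W_eq_Q'[OF refl refl ns A_def hakA hak1A hK hphi hvphi q_def])
  have QQ: "0 \<le> \<eta>/(4* q)*(norm (T *\<^sub>R wk1 - (T-s) *\<^sub>R wk))^2 + K* T/2*(norm wk1)^2
     + ((s-1)*\<eta>/2 + K*(s+1)/2)*(norm wk)^2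
     + \<eta>* T* inner (T *\<^sub>R wk1 - (T-s) *\<^sub>R wk) ek - (T-s)* A* inner (T *\<^sub>R wk1 - (T-s) *\<^sub>R wk) \<delta>
     - K*(T-1)* inner wk \<delta>
     + ((2* q+1)*\<eta>*(T-1)^2 + K*(s-1)*(T-1)/2)*(norm \<delta>)^2
     - \<eta>* T*(T-s)/2*(norm (\<delta> - ek))^2 + (2* q+1)*\<eta>* T^2*(norm ek)^2"
    by (rule core[OF s T eta K0 K16 A0 A1 q_def refl])
  have bT2: "\<beta>* T*(T-s)* inner wk (wk + \<delta>) = (A*(T-s) - K)*(T-s)* inner wk (wk + \<delta>)" using bT by simp
  have rd: "inner r (wk + \<delta> - wk) = inner r \<delta>" by simp
  have S1': "Pk - Pk1 = s*(s-1)* inner wk (xk - xs) + T*(T-s)* inner (wk1 - wk) (xk1 - xk)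
      + (ak/2*(norm wk)^2 - ak1/2*(norm wk1)^2 + \<eta>* T^2* inner wk1 (hk1 + ek) - \<eta>* T*(T-s)* inner wk (hk1 + ek)
         - T*(T-s)* A* inner wk1 (wk + \<delta>) + \<beta>* T*(T-s)* inner wk (wk + \<delta>) + cr*(norm r)^2 + s*(s-1)* inner r \<delta>
         - (s-1)* K/2*(norm (wk + \<delta>))^2)"
    using S1 unfolding \<delta> hup rd .
  have nn: "(norm (hk1 - wk))^2 = (norm (wk - hk1))^2" by (simp add: norm_minus_commute)
  have goal_m: "M2*\<eta>^2* T/(T-s) = m" unfolding m_def ..
  show ?thesis unfolding goal_m using S1' M' Lf Yr Y2 Y3 Y4 WQ' QQ bT2 by linarith
qed

theorem mainTheorem9:
  fixes G :: "'a::euclidean_space \<Rightarrow> 'a"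
    and T :: "'a \<Rightarrow> 'a set"
    and Xi :: "'b measure"
    and Gxi :: "'b \<Rightarrow> 'a \<Rightarrow> 'a"
    and L \<alpha> \<rho>s \<rho>n \<rho>c s \<eta> \<gamma> \<omega> t0 :: real
    and xs :: 'a
    and x y z v Gt :: "int \<Rightarrow> 'a"
  fixes EG :: "'a \<Rightarrow> 'a \<Rightarrow> real" and c1 c2 psi M2 vphi :: real
    and t gk beta a P phi :: "int \<Rightarrow> real" and w what e xhat :: "int \<Rightarrow> 'a"
  assumes "EG = (\<lambda>p q. integral\<^sup>L Xi (\<lambda>\<xi>. (norm (Gxi \<xi> p - Gxi \<xi> q))\<^sup>2))"
    and "c1 = (s - 2) / (8 * (s - 1))"
    and "c2 = (s - 2) / (8 * (s - 1))"
    and "psi = (1 - c1 - c2) * \<eta> - 2 * \<rho>n"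
    and "\<forall>k. t k = t0 + of_int k"
    and "\<forall>k. gk k = \<gamma> * (t k - 1) / t k"
    and "\<forall>k. beta k = ((c1 * \<eta> + c2 * \<eta> + 2 * \<rho>n) * (t k - s) - gk k) / t k"
    and "M2 = 2 * (1 + \<omega>) * L\<^sup>2"
    and "\<forall>k. a k = psi * (t (k - 1))\<^sup>2 + 2 * s * \<rho>n * t (k - 1) - \<gamma> * (t (k - 1) - 1)"
    and "\<forall>k. w k = G (x k) + v k"
    and "\<forall>k. what k = G (y (k - 1)) + v k"
    and "\<forall>k. e k = Gt k - G (y k)"
    and "\<forall>k. xhat k = ((t k - s) / t k) *\<^sub>R x k + (s / t k) *\<^sub>R z k"
    and "\<forall>k. P k = a k / 2 * (norm (w k))\<^sup>2 + s * t (k - 1) * inner (w k) (x k - z k)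
               + s\<^sup>2 * (s - 1) / (2 * gk (k - 1)) * (norm (z k - xs))\<^sup>2"
    and "\<forall>k. phi k = ((s - 2) / 2 * \<eta> - 4 * (s - 1) * \<rho>n - 3 * \<gamma>) * (t k - 1)
               + (s - 1) * (s - 2) * \<eta> / 4 + 2 * (2 * s\<^sup>2 - 3 * s + 1) * \<rho>n + \<gamma>"
    and "vphi = 2 * (5 * s - 6) * \<eta> / (s - 2) + (s - 1) * \<gamma>"
    and prob: "prob_space Xi"
    and unbiased: "\<forall>p. integrable Xi (\<lambda>\<xi>. Gxi \<xi> p) \<and> integral\<^sup>L Xi (\<lambda>\<xi>. Gxi \<xi> p) = G p"
    and sq_int: "\<forall>p q. integrable Xi (\<lambda>\<xi>. (norm (Gxi \<xi> p - Gxi \<xi> q))\<^sup>2)"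
    and L_pos: "L > 0" and alpha: "0 \<le> \<alpha>" "\<alpha> \<le> 1"
    and A1: "\<forall>p q. \<alpha> * (norm (G p - G q))\<^sup>2 + (1 - \<alpha>) * EG p q \<le> L\<^sup>2 * (norm (p - q))\<^sup>2"
    and A2_zer: "\<exists>u\<in>T xs. G xs + u = 0"
    and A2: "\<rho>s \<ge> 0" "\<forall>p u. u \<in> T p \<longrightarrow> inner (G p + u) (p - xs) \<ge> - \<rho>s * (norm (G p + u))\<^sup>2"
    and A3: "\<rho>n \<ge> \<rho>c" "\<rho>c \<ge> 0"
      "\<forall>p q u u'. u \<in> T p \<longrightarrow> u' \<in> T q \<longrightarrow>
         inner ((G p + u) - (G q + u')) (p - q)
           \<ge> - \<rho>n * (norm ((G p + u) - (G q + u')))\<^sup>2 + \<rho>c * EG p q"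
    and params: "\<eta> > 0" "\<gamma> > 0" "\<omega> \<ge> 0" "s > 2" "t0 \<ge> s + 1"
    and step: "\<forall>k\<ge>0. M2 * \<eta>\<^sup>2 * t k / (t k - s) \<le> 1"
    and gam: "\<gamma> < 16 * \<eta>"
    and rho_cond: "(3 * s - 2) * \<eta> \<ge> 8 * (s - 1) * \<rho>n"
    and init: "v 0 \<in> T (x 0)" "z 0 = x 0" "y (-1) = x 0" "Gt (-1) = G (x 0)"
    and alg_y: "\<forall>k\<ge>0. y k = xhat k - (\<eta> - beta k) *\<^sub>R (Gt (k - 1) + v k)"
    and alg_x: "\<forall>k\<ge>0. x (k + 1) = xhat k - \<eta> *\<^sub>R (Gt k + v (k + 1)) + beta k *\<^sub>R (Gt (k - 1) + v k)"
    and alg_v: "\<forall>k\<ge>0. v (k + 1) \<in> T (x (k + 1))"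
    and alg_z: "\<forall>k\<ge>0. z (k + 1) = z k - (gk k / s) *\<^sub>R (Gt (k - 1) + v k)"
  shows "(\<forall>k\<ge>0. beta k \<le> ((s - 2) * \<eta> / (4 * (s - 1)) + 2 * \<rho>n) * (t k - s) / t k)
    \<and> (\<forall>k\<ge>0. P k - P (k + 1) \<ge>
          \<eta> * (t k)\<^sup>2 / 2 * ((1 - \<alpha>) * (EG (x (k + 1)) (y k) - (norm (G (x (k + 1)) - G (y k)))\<^sup>2)
                              + \<omega> * L\<^sup>2 * (norm (x (k + 1) - y k))\<^sup>2)
        + \<rho>c * t k * (t k - s) * EG (x (k + 1)) (x k)
        + \<eta> * t k * (t k - s) / 2 * (1 - M2 * \<eta>\<^sup>2 * t k / (t k - s)) * (norm (what (k + 1) - w k))\<^sup>2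
        + \<eta> * s * t k / 2 * (norm (what (k + 1)))\<^sup>2
        + phi k / 2 * (norm (w k))\<^sup>2 + s * (s - 1) * inner (w k) (x k - xs)
        - vphi * (t (k - 1))\<^sup>2 * (norm (w k - what k))\<^sup>2
        - (5 * s - 6) * \<eta> * (t k)\<^sup>2 / (s - 2) * (norm (e k))\<^sup>2
        - vphi * (t (k - 1))\<^sup>2 * (norm (e (k - 1)))\<^sup>2)"
  proof -
  have tdef: "\<And>k. t k = t0 + of_int k" using assms(5) by simp
  have gkdef: "\<And>k. gk k = \<gamma> * (t k - 1) / t k" using assms(6) by simp
  have betadef: "\<And>k. beta k = ((c1 * \<eta> + c2 * \<eta> + 2 * \<rho>n) * (t k - s) - gk k) / t k" using assms(7) by simp
  have adef: "\<And>k. a k = psi * (t (k - 1))\<^sup>2 + 2 * s * \<rho>n * t (k - 1) - \<gamma> * (t (k - 1) - 1)"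
    using assms(9) by simp
  have wdef: "\<And>k. w k = G (x k) + v k" using assms(10) by simp
  have whatdef: "\<And>k. what k = G (y (k - 1)) + v k" using assms(11) by simp
  have edef: "\<And>k. e k = Gt k - G (y k)" using assms(12) by simp
  have xhatdef: "\<And>k. xhat k = ((t k - s) / t k) *\<^sub>R x k + (s / t k) *\<^sub>R z k" using assms(13) by simp
  have Pdef: "\<And>k. P k = a k / 2 * (norm (w k))\<^sup>2 + s * t (k - 1) * inner (w k) (x k - z k)
               + s\<^sup>2 * (s - 1) / (2 * gk (k - 1)) * (norm (z k - xs))\<^sup>2" using assms(14) by simp
  have phidef: "\<And>k. phi k = ((s - 2) / 2 * \<eta> - 4 * (s - 1) * \<rho>n - 3 * \<gamma>) * (t k - 1)
               + (s - 1) * (s - 2) * \<eta> / 4 + 2 * (2 * s\<^sup>2 - 3 * s + 1) * \<rho>n + \<gamma>" using assms(15) by simp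
  have s2: "s > 2" and eta: "\<eta> > 0" and g0: "\<gamma> > 0" and om: "\<omega> \<ge> 0" and t0s: "t0 \<ge> s + 1"
    using params by simp_all
  have rn: "\<rho>n \<ge> 0" using A3(1) A3(2) by simp
  have tk_ge: "\<And>k. k \<ge> 0 \<Longrightarrow> t k \<ge> s + 1" using tdef t0s by simp
  have part1: "\<forall>k\<ge>0. beta k \<le> ((s - 2) * \<eta> / (4 * (s - 1)) + 2 * \<rho>n) * (t k - s) / t k"
  proof (intro allI impI)
    fix k :: int assume k0: "k \<ge> 0"
    have T: "t k \<ge> s + 1" using tk_ge k0 .
    have Tpos: "t k > 0" using T s2 by simp
    have cc: "c1 * \<eta> + c2 * \<eta> = (s - 2) * \<eta> / (4 * (s - 1))"
    proof -
      have "c1 + c2 = (s-2)/(4*(s-1))" unfolding assms(2) assms(3) using half8[of "s-1" "s-2"] s2 by simp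
      moreover have "c1 * \<eta> + c2 * \<eta> = (c1 + c2) * \<eta>" by (simp add: algebra_simps)
      ultimately show ?thesis by simp
    qed
    have gk0: "gk k \<ge> 0" unfolding gkdef using g0 T Tpos s2
      by (intro divide_nonneg_pos mult_nonneg_nonneg) simp_all
    have "beta k = (((s - 2) * \<eta> / (4 * (s - 1)) + 2 * \<rho>n) * (t k - s) - gk k) / t k"
      unfolding betadef cc ..
    also have "... \<le> ((s - 2) * \<eta> / (4 * (s - 1)) + 2 * \<rho>n) * (t k - s) / t k"
      using gk0 Tpos by (intro divide_right_mono) simp_all
    finally show "beta k \<le> ((s - 2) * \<eta> / (4 * (s - 1)) + 2 * \<rho>n) * (t k - s) / t k" .
  qed
  have part2: "\<forall>k\<ge>0. P k - P (k + 1) \<ge>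
          \<eta> * (t k)\<^sup>2 / 2 * ((1 - \<alpha>) * (EG (x (k + 1)) (y k) - (norm (G (x (k + 1)) - G (y k)))\<^sup>2)
                              + \<omega> * L\<^sup>2 * (norm (x (k + 1) - y k))\<^sup>2)
        + \<rho>c * t k * (t k - s) * EG (x (k + 1)) (x k)
        + \<eta> * t k * (t k - s) / 2 * (1 - M2 * \<eta>\<^sup>2 * t k / (t k - s)) * (norm (what (k + 1) - w k))\<^sup>2
        + \<eta> * s * t k / 2 * (norm (what (k + 1)))\<^sup>2
        + phi k / 2 * (norm (w k))\<^sup>2 + s * (s - 1) * inner (w k) (x k - xs)
        - vphi * (t (k - 1))\<^sup>2 * (norm (w k - what k))\<^sup>2
        - (5 * s - 6) * \<eta> * (t k)\<^sup>2 / (s - 2) * (norm (e k))\<^sup>2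
        - vphi * (t (k - 1))\<^sup>2 * (norm (e (k - 1)))\<^sup>2"
  proof (intro allI impI)
    fix k :: int assume k0: "k \<ge> 0"
    define Tk where "Tk = t k"
    have T: "t k \<ge> s + 1" using tk_ge k0 .
    have Tpos: "t k \<noteq> 0" using T s2 by simp
    have Tm: "t (k - 1) = t k - 1" unfolding tdef by simp
    have k11: "k + 1 - 1 = k" by simp
    have stp: "M2 * \<eta>\<^sup>2 * t k / (t k - s) \<le> 1" using step k0 by simp
    have hK: "gk k = \<gamma> * (t k - 1) / t k" by (rule gkdef)
    have hgkm: "gk (k - 1) = \<gamma> * (t (k - 1) - 1) / t (k - 1)" by (rule gkdef)
    have hak1: "a (k + 1) = psi * (t k)\<^sup>2 + 2 * s * \<rho>n * t k - \<gamma> * (t k - 1)"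
      using adef[of "k+1"] unfolding k11 .
    have hPk1: "P (k + 1) = a (k + 1) / 2 * (norm (w (k + 1)))\<^sup>2 + s * t k * inner (w (k + 1)) (x (k + 1) - z (k + 1))
               + s\<^sup>2 * (s - 1) / (2 * gk k) * (norm (z (k + 1) - xs))\<^sup>2"
      using Pdef[of "k+1"] unfolding k11 .
    define u where "u = Gt (k - 1) + v k"
    define up where "up = Gt k + v (k + 1)"
    have hu: "u = what k + e (k - 1)" unfolding u_def whatdef edef by simp
    have hup: "up = what (k + 1) + e k" unfolding up_def whatdef[of "k+1"] edef k11 by simp
    have xk1: "x (k + 1) = xhat k - \<eta> *\<^sub>R up + beta k *\<^sub>R u" unfolding u_def up_def using alg_x k0 by simp
    have zk1: "z (k + 1) = z k - (gk k / s) *\<^sub>R u" unfolding u_def using alg_z k0 by simp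
    have yk: "y k = xhat k - (\<eta> - beta k) *\<^sub>R u" unfolding u_def using alg_y k0 by simp
    have v1: "x (k + 1) - z (k + 1) = ((t k - s) / t k) *\<^sub>R (x k - z k) - \<eta> *\<^sub>R up + (beta k + gk k / s) *\<^sub>R u"
    proof -
      have "x (k + 1) - z (k + 1) = (((t k - s) / t k) *\<^sub>R x k + (s / t k) *\<^sub>R z k - z k) - \<eta> *\<^sub>R up
          + (beta k + gk k / s) *\<^sub>R u"
        unfolding xk1 zk1 xhatdef by (simp add: algebra_simps scaleR_left_distrib)
      also have "((t k - s) / t k) *\<^sub>R x k + (s / t k) *\<^sub>R z k - z k = ((t k - s) / t k) *\<^sub>R (x k - z k)"
        by (rule xh1) (rule Tpos)
      finally show ?thesis .
    qed
    have v2: "z (k + 1) - xs = (z k - xs) - (gk k / s) *\<^sub>R u" unfolding zk1 by simp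
    have v3: "x (k + 1) - x k = -(s / t k) *\<^sub>R (x k - z k) - \<eta> *\<^sub>R up + beta k *\<^sub>R u"
    proof -
      have "x (k + 1) - x k = (((t k - s) / t k) *\<^sub>R x k + (s / t k) *\<^sub>R z k - x k) - \<eta> *\<^sub>R up + beta k *\<^sub>R u"
        unfolding xk1 xhatdef by (simp add: algebra_simps)
      also have "((t k - s) / t k) *\<^sub>R x k + (s / t k) *\<^sub>R z k - x k = -(s / t k) *\<^sub>R (x k - z k)"
        by (rule xh2) (rule Tpos)
      finally show ?thesis .
    qed
    have v4: "x (k + 1) - y k = \<eta> *\<^sub>R (u - up)"
      unfolding xk1 yk by (simp add: algebra_simps scaleR_left_diff_distrib)
    have v5: "G (x (k + 1)) - G (y k) = w (k + 1) - what (k + 1)"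
      unfolding wdef whatdef[of "k+1"] k11 by simp
    have vk: "v k \<in> T (x k)"
    proof (cases "k = 0")
      case True then show ?thesis using init(1) by simp
    next
      case False
      then have "k - 1 \<ge> 0" using k0 by simp
      then have "v (k - 1 + 1) \<in> T (x (k - 1 + 1))" using alg_v by blast
      then show ?thesis by simp
    qed
    have vk1: "v (k + 1) \<in> T (x (k + 1))" using alg_v k0 by simp
    have mono: "inner (w (k + 1) - w k) (x (k + 1) - x k)
        \<ge> -\<rho>n * (norm (w (k + 1) - w k))\<^sup>2 + \<rho>c * EG (x (k + 1)) (x k)"
      using A3(3) vk1 vk unfolding wdef by blast
    have lip: "\<alpha> * (norm (G (x (k + 1)) - G (y k)))\<^sup>2 + (1 - \<alpha>) * EG (x (k + 1)) (y k)
        \<le> L\<^sup>2 * (norm (x (k + 1) - y k))\<^sup>2" using A1 by blast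
    show "P k - P (k + 1) \<ge>
          \<eta> * (t k)\<^sup>2 / 2 * ((1 - \<alpha>) * (EG (x (k + 1)) (y k) - (norm (G (x (k + 1)) - G (y k)))\<^sup>2)
                              + \<omega> * L\<^sup>2 * (norm (x (k + 1) - y k))\<^sup>2)
        + \<rho>c * t k * (t k - s) * EG (x (k + 1)) (x k)
        + \<eta> * t k * (t k - s) / 2 * (1 - M2 * \<eta>\<^sup>2 * t k / (t k - s)) * (norm (what (k + 1) - w k))\<^sup>2
        + \<eta> * s * t k / 2 * (norm (what (k + 1)))\<^sup>2
        + phi k / 2 * (norm (w k))\<^sup>2 + s * (s - 1) * inner (w k) (x k - xs)
        - vphi * (t (k - 1))\<^sup>2 * (norm (w k - what k))\<^sup>2
        - (5 * s - 6) * \<eta> * (t k)\<^sup>2 / (s - 2) * (norm (e k))\<^sup>2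
        - vphi * (t (k - 1))\<^sup>2 * (norm (e (k - 1)))\<^sup>2"
      by (rule step_lemma[OF s2 eta g0 gam om rn rho_cond T Tm stp assms(8) assms(2) assms(3) assms(4)
            hK hgkm betadef adef hak1 phidef assms(16) Pdef hPk1 hu hup v1 v2 v3 v4 v5 mono lip])
  qed
  show ?thesis using part1 part2 by blast
qed

end
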